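(* Consider the single-armed lazy restless bandit described in the context with fixed subsidy $\eta$ and $p_{0,0}>p_{1,0}$, and let $b=\min\left\{1,\frac{R_1-R_0}{\rho_1-\rho_0}\right\}$. Then $\pi\mapsto V_S(\pi)-V_{NS}(\pi)$ is decreasing on $[0,1]$ under any of the following conditions: (1) $K$ is large, i.e. in the large-$K$ model where $\gamma_2(\pi)$ is replaced by the constant $q$; (2) for any $K>1$, when $0<p_{0,0}-p_{1,0}<b/5$ and $\beta\in(0,1)$; (3) for any $K>1$, when $\beta\in(0,b/5)$.
   Context: Single-armed lazy restless bandit: an arm has a hidden state in $\{0,1\}$ evolving as a two-state Markov chain with transition probabilities $p_{i,j}$ ($p_{i,0}+p_{i,1}=1$). During each session the chain makes exactly $K\ge1$ transitions. In each session the decision maker plays the arm or not. If played with the arm in state $i$ at session start, an ACK is received with probability $\rho_i\in[0,1]$ and the expected reward is $R_i$; if not played, subsidy $\eta$ is received and nothing observed. Discount $\beta\in(0,1)$. Standing assumptions: $\rho_0<\rho_1$, $R_0<R_1$. Belief $\pi\in[0,1]$ = probability of state $0$. $R_S(\pi)=\pi R_0+(1-\pi)R_1$, $\rho(\pi)=\pi\rho_0+(1-\pi)\rho_1$, $\gamma_1(\pi)=\frac{(1-\pi)\rho_1p_{1,0}+\pi\rho_0p_{0,0}}{\rho_1(1-\pi)+\rho_0\pi}$, $\gamma_0(\pi)=\frac{(1-\pi)(1-\rho_1)p_{1,0}+\pi(1-\rho_0)p_{0,0}}{(1-\rho_1)(1-\pi)+(1-\rho_0)\pi}$, $\gamma_2(\pi)=(p_{0,0}-p_{1,0})^K\pi+p_{1,0}\sum_{j=0}^{K-1}(p_{0,0}-p_{1,0})^j$.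 $V_S,V_{NS},V$ are the unique bounded solution of $V_S(\pi)=R_S(\pi)+\beta\big(\rho(\pi)V(\gamma_1(\pi))+(1-\rho(\pi))V(\gamma_0(\pi))\big)$, $V_{NS}(\pi)=\eta+\beta V(\gamma_2(\pi))$, $V(\pi)=\max\{V_S(\pi),V_{NS}(\pi)\}$ (a term with zero coefficient is taken to be $0$). Let $q=\frac{p_{1,0}}{1-(p_{0,0}-p_{1,0})}$; the "large-$K$ model" is the same dynamic program with $\gamma_2(\pi)$ replaced by the constant $q$ for all $\pi$. *)

theory Defs
  imports Complex_Main
begin

text \<open>Single-armed lazy restless bandit. Beliefs are probabilities of state 0.
  Transition probabilities p00 = p_{0,0}, p10 = p_{1,0}; p_{0,1} = 1 - p00, p_{1,1} = 1 - p10.\<close>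

definition RS :: "real \<Rightarrow> real \<Rightarrow> real \<Rightarrow> real" where
  "RS R0 R1 \<pi> = \<pi> * R0 + (1 - \<pi>) * R1"

definition rho :: "real \<Rightarrow> real \<Rightarrow> real \<Rightarrow> real" where
  "rho \<rho>0 \<rho>1 \<pi> = \<pi> * \<rho>0 + (1 - \<pi>) * \<rho>1"

definition gamma1 :: "real \<Rightarrow> real \<Rightarrow> real \<Rightarrow> real \<Rightarrow> real \<Rightarrow> real" where
  "gamma1 p00 p10 \<rho>0 \<rho>1 \<pi> =
     ((1 - \<pi>) * \<rho>1 * p10 + \<pi> * \<rho>0 * p00) / (\<rho>1 * (1 - \<pi>) + \<rho>0 * \<pi>)"

definition gamma0 :: "real \<Rightarrow> real \<Rightarrow> real \<Rightarrow> real \<Rightarrow> real \<Rightarrow> real" where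
  "gamma0 p00 p10 \<rho>0 \<rho>1 \<pi> =
     ((1 - \<pi>) * (1 - \<rho>1) * p10 + \<pi> * (1 - \<rho>0) * p00) /
     ((1 - \<rho>1) * (1 - \<pi>) + (1 - \<rho>0) * \<pi>)"

definition gamma2 :: "nat \<Rightarrow> real \<Rightarrow> real \<Rightarrow> real \<Rightarrow> real" where
  "gamma2 K p00 p10 \<pi> = (p00 - p10) ^ K * \<pi> + p10 * (\<Sum>j<K. (p00 - p10) ^ j)"

definition qlim :: "real \<Rightarrow> real \<Rightarrow> real" where
  "qlim p00 p10 = p10 / (1 - (p00 - p10))"

text \<open>A term with zero coefficient contributes 0, which holds
  automatically here since it is multiplied by 0.\<close>

definition bandit_solution ::
  "(real \<Rightarrow> real) \<Rightarrow> real \<Rightarrow> real \<Rightarrow> real \<Rightarrow> real \<Rightarrow> real \<Rightarrow> real \<Rightarrow> real \<Rightarrow> real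
   \<Rightarrow> (real \<Rightarrow> real) \<Rightarrow> (real \<Rightarrow> real) \<Rightarrow> (real \<Rightarrow> real) \<Rightarrow> bool" where
  "bandit_solution g2 p00 p10 \<rho>0 \<rho>1 R0 R1 \<eta> \<beta> VS VNS V \<longleftrightarrow>
     (\<exists>B. \<forall>\<pi>\<in>{0..1}. \<bar>VS \<pi>\<bar> \<le> B \<and> \<bar>VNS \<pi>\<bar> \<le> B \<and> \<bar>V \<pi>\<bar> \<le> B) \<and>
     (\<forall>\<pi>\<in>{0..1}.
        VS \<pi> = RS R0 R1 \<pi> + \<beta> * (rho \<rho>0 \<rho>1 \<pi> * V (gamma1 p00 p10 \<rho>0 \<rho>1 \<pi>)
                 + (1 - rho \<rho>0 \<rho>1 \<pi>) * V (gamma0 p00 p10 \<rho>0 \<rho>1 \<pi>)) \<and>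
        VNS \<pi> = \<eta> + \<beta> * V (g2 \<pi>) \<and>
        V \<pi> = max (VS \<pi>) (VNS \<pi>))"

definition decreasing_on_unit :: "(real \<Rightarrow> real) \<Rightarrow> bool" where
  "decreasing_on_unit f \<longleftrightarrow> (\<forall>x y. 0 \<le> x \<and> x \<le> y \<and> y \<le> 1 \<longrightarrow> f y \<le> f x)"

end

theory Submission
  imports Defs
begin


lemma le_of_pow_bound:
  fixes a c M b :: real
  assumes "0 < b" "b < 1" "\<forall>n. a \<le> c + b^n * M"
  shows "a \<le> c"
proof -
  have "norm b < 1" using assms by simp
  then have "(\<lambda>n. b^n) \<longlonglongrightarrow> 0" by (rule LIMSEQ_power_zero)
  then have "(\<lambda>n. c + b^n * M) \<longlonglongrightarrow> c + 0 * M"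
    using tendsto_add[OF tendsto_const[of c] tendsto_mult[OF _ tendsto_const[of M]]] by blast
  then have "(\<lambda>n. c + b^n*M) \<longlonglongrightarrow> c" by simp
  then show ?thesis using LIMSEQ_le_const assms(3) by blast
qed

definition cvx :: "(real \<Rightarrow> real) \<Rightarrow> bool" where
  "cvx f \<longleftrightarrow> (\<forall>x y t. 0\<le>x \<and> x\<le>1 \<and> 0\<le>y \<and> y\<le>1 \<and> 0\<le>t \<and> t\<le>1 \<longrightarrow>
      f (t*x+(1-t)*y) \<le> t * f x + (1-t) * f y)"
definition decr :: "(real \<Rightarrow> real) \<Rightarrow> bool" where
  "decr f \<longleftrightarrow> (\<forall>x y. 0\<le>x \<and> x\<le>y \<and> y\<le>1 \<longrightarrow> f y \<le> f x)"
definition lipd :: "real \<Rightarrow> (real \<Rightarrow> real) \<Rightarrow> bool" where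
  "lipd L f \<longleftrightarrow> (\<forall>x y. 0\<le>x \<and> x\<le>y \<and> y\<le>1 \<longrightarrow> f x - f y \<le> L*(y-x))"

lemma cvxD: "cvx f \<Longrightarrow> 0\<le>x \<Longrightarrow> x\<le>1 \<Longrightarrow> 0\<le>y \<Longrightarrow> y\<le>1 \<Longrightarrow> 0\<le>t \<Longrightarrow> t\<le>1
  \<Longrightarrow> f (t*x+(1-t)*y) \<le> t * f x + (1-t) * f y"
  unfolding cvx_def by blast

lemma persp:
  assumes "cvx f" "0\<le>wx" "0\<le>wy" "0\<le>t" "t\<le>1" "0\<le>gx" "gx\<le>1" "0\<le>gy" "gy\<le>1"
   "wz = t*wx+(1-t)*wy" "wz*gz = t*wx*gx + (1-t)*wy*gy"
  shows "wz * f gz \<le> t*wx*f gx + (1-t)*wy*f gy"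
proof (cases "wz = 0")
  case True
  have a: "t*wx \<ge> 0" "(1-t)*wy \<ge> 0" using assms by auto
  then have "t*wx = 0" "(1-t)*wy=0" using True assms(10) by linarith+
  then have "t*wx*f gx = 0" "(1-t)*wy*f gy = 0" by (simp_all only: mult_zero_left)
  moreover have "wz * f gz = 0" using True by simp
  ultimately show ?thesis by linarith
next
  case False
  have a: "t*wx \<ge> 0" "(1-t)*wy \<ge> 0" using assms by auto
  hence wz: "wz > 0" using False assms(10) by linarith
  define u where "u = t*wx/wz"
  have u1: "1-u = (1-t)*wy/wz" using assms wz by (simp add: u_def field_simps)
  have "t*wx \<le> wz" using a assms(10) by linarith
  hence u0: "0 \<le> u" "u \<le> 1" using a wz by (auto simp: u_def)
  have gz: "gz = u*gx + (1-u)*gy" proof -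
    have e: "wz - t*wx = (1-t)*wy" using assms(10) by simp
    have "wz*(u*gx + (1-u)*gy) = t*wx*gx + (wz - t*wx)*gy" using wz by (simp add: u_def field_simps)
    also have "\<dots> = wz * gz" unfolding e assms(11) ..
    finally have "wz * gz = wz * (u*gx + (1-u)*gy)" ..
    then show ?thesis using wz by simp
  qed
  have "f gz \<le> u*f gx + (1-u)*f gy" using assms(1) u0 assms(6-9) unfolding cvx_def gz by blast
  hence "wz * f gz \<le> wz*(u*f gx + (1-u)*f gy)" using wz by (simp add: mult_left_mono)
  also have "\<dots> = t*wx*f gx + (wz - t*wx)*f gy" using wz by (simp add: u_def field_simps)
  also have "\<dots> = t*wx*f gx + (1-t)*wy*f gy" using assms(10) by simp
  finally show ?thesis .
qed

lemma chord:
  assumes "cvx g" "0\<le>x" "x\<le>y" "y\<le>1"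
  shows "g x + g (y-x) \<le> g 0 + g y"
proof (cases "y = 0")
  case True then show ?thesis using assms by simp
next
  case False
  hence y: "y > 0" using assms by simp
  define t where "t = x/y"
  have t: "0 \<le> t" "t \<le> 1" using assms y by (auto simp: t_def)
  have 1: "g (t*y + (1-t)*0) \<le> t * g y + (1-t) * g 0"
    using cvxD[OF assms(1), of y 0 t] t assms by simp
  have 2: "g ((1-t)*y + (1-(1-t))*0) \<le> (1-t) * g y + (1-(1-t)) * g 0"
  proof -
    have "0 \<le> 1-t" "1-t \<le> 1" using t by auto
    then show ?thesis using cvxD[OF assms(1), of y 0 "1-t"] t assms by simp
  qed
  have "t*y = x" using y by (simp add: t_def)
  then have e: "t*y + (1-t)*0 = x" "(1-t)*y + (1-(1-t))*0 = y - x" by (auto simp: algebra_simps)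
  have "t * g y + (1-t) * g 0 + ((1-t) * g y + (1-(1-t)) * g 0) = g 0 + g y"
    by (simp add: algebra_simps)
  then show ?thesis using 1 2 unfolding e by linarith
qed




locale bl =
  fixes p00 p10 r0 r1 R0 R1 eta beta s c :: real and g2 :: "real \<Rightarrow> real"
  assumes p00: "p00 \<le> 1" and p10: "0 \<le> p10" and pd: "p10 < p00"
   and r0: "0 \<le> r0" and r1: "r1 \<le> 1" and rr: "r0 < r1" and RR: "R0 < R1"
   and b0: "0 < beta" and b1: "beta < 1"
   and s0: "0 \<le> s" and s1: "s \<le> 1" and g2: "\<And>x. g2 x = s*x + c"
   and g2r: "\<And>x. 0\<le>x \<Longrightarrow> x\<le>1 \<Longrightarrow> 0 \<le> g2 x \<and> g2 x \<le> 1"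
begin

definition "d = p00 - p10"
definition "L = (R1-R0)/(1-beta*d)"
definition "Gop f x = rho r0 r1 x * f (gamma1 p00 p10 r0 r1 x) + (1 - rho r0 r1 x) * f (gamma0 p00 p10 r0 r1 x)"
definition "TSop f x = RS R0 R1 x + beta * Gop f x"
definition "TNop f x = eta + beta * f (g2 x)"
definition "Top f x = max (TSop f x) (TNop f x)"

lemma d01: "0 < d" "d \<le> 1" using pd p00 p10 by (auto simp: d_def)

lemma bd: "beta * d < 1"
proof -
  have "beta * d \<le> beta * 1" using d01 b0 by (intro mult_left_mono) auto
  then show ?thesis using b1 by simp
qed

lemma L0: "0 \<le> L" using bd RR by (simp add: L_def)
lemma Leq: "R1 - R0 + beta*d*L = L"
  using bd by (simp add: L_def field_simps)

lemma rho01: "0\<le>x \<Longrightarrow> x\<le>1 \<Longrightarrow> 0 \<le> rho r0 r1 x \<and> rho r0 r1 x \<le> 1"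
proof -
  assume x: "0\<le>x" "x\<le>1"
  have "x*r0 \<le> x*1" "(1-x)*r1 \<le> (1-x)*1" using x r0 rr r1 by (intro mult_left_mono; simp)+
  moreover have "0 \<le> x*r0" "0 \<le> (1-x)*r1" using x r0 rr by simp_all
  ultimately show ?thesis unfolding rho_def by simp
qed

lemma N1: "0\<le>x \<Longrightarrow> x\<le>1 \<Longrightarrow> rho r0 r1 x * gamma1 p00 p10 r0 r1 x = (1-x)*r1*p10 + x*r0*p00"
proof -
  assume x: "0\<le>x" "x\<le>1"
  show ?thesis
  proof (cases "rho r0 r1 x = 0")
    case True
    have "0 \<le> x*r0" "0 \<le> (1-x)*r1" using x r0 rr by simp_all
    with True have "x*r0 = 0" "(1-x)*r1 = 0" unfolding rho_def by linarith+
    then have "(1-x)*r1*p10 = 0" "x*r0*p00 = 0" by (simp_all only: mult_zero_left)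
    moreover have "rho r0 r1 x * gamma1 p00 p10 r0 r1 x = 0" using True by simp
    ultimately show ?thesis by linarith
  next
    case False
    have e: "r1 * (1 - x) + r0 * x = rho r0 r1 x" by (simp add: rho_def)
    show ?thesis using False unfolding gamma1_def e by simp
  qed
qed

lemma N0: "0\<le>x \<Longrightarrow> x\<le>1 \<Longrightarrow> (1 - rho r0 r1 x) * gamma0 p00 p10 r0 r1 x = (1-x)*(1-r1)*p10 + x*(1-r0)*p00"
proof -
  assume x: "0\<le>x" "x\<le>1"
  show ?thesis
  proof (cases "1 - rho r0 r1 x = 0")
    case True
    have "0 \<le> x*(1-r0)" "0 \<le> (1-x)*(1-r1)" using x r1 rr by simp_all
    moreover have "1 - rho r0 r1 x = x*(1-r0) + (1-x)*(1-r1)" by (simp add: rho_def algebra_simps)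
    ultimately have "x*(1-r0) = 0" "(1-x)*(1-r1) = 0" using True by linarith+
    then have "(1-x)*(1-r1)*p10 = 0" "x*(1-r0)*p00 = 0" by (simp_all only: mult_zero_left)
    moreover have "(1 - rho r0 r1 x) * gamma0 p00 p10 r0 r1 x = 0" using True by simp
    ultimately show ?thesis by linarith
  next
    case False
    have e: "(1 - r1) * (1 - x) + (1 - r0) * x = 1 - rho r0 r1 x" by (simp add: rho_def algebra_simps)
    show ?thesis using False unfolding gamma0_def e by simp
  qed
qed

lemma frac01: "0 \<le> (a::real) \<Longrightarrow> a \<le> b \<Longrightarrow> 0 \<le> a / b \<and> a / b \<le> 1"
  by (auto simp: divide_le_eq_1)

lemma g1r: "0\<le>x \<Longrightarrow> x\<le>1 \<Longrightarrow> 0 \<le> gamma1 p00 p10 r0 r1 x \<and> gamma1 p00 p10 r0 r1 x \<le> 1"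
proof -
  assume x: "0\<le>x" "x\<le>1"
  have a: "0 \<le> (1-x)*r1" "0 \<le> x*r0" using x r0 rr by simp_all
  have "(1-x)*r1*p10 \<le> (1-x)*r1*1" "x*r0*p00 \<le> x*r0*1" using a p00 pd by (intro mult_left_mono; simp)+
  moreover have "0 \<le> (1-x)*r1*p10" "0 \<le> x*r0*p00" using a p10 pd by simp_all
  ultimately show ?thesis unfolding gamma1_def by (intro frac01) (simp_all add: mult.commute)
qed

lemma g0r: "0\<le>x \<Longrightarrow> x\<le>1 \<Longrightarrow> 0 \<le> gamma0 p00 p10 r0 r1 x \<and> gamma0 p00 p10 r0 r1 x \<le> 1"
proof -
  assume x: "0\<le>x" "x\<le>1"
  have a: "0 \<le> (1-x)*(1-r1)" "0 \<le> x*(1-r0)" using x r1 rr by simp_all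
  have "(1-x)*(1-r1)*p10 \<le> (1-x)*(1-r1)*1" "x*(1-r0)*p00 \<le> x*(1-r0)*1" using a p00 pd by (intro mult_left_mono; simp)+
  moreover have "0 \<le> (1-x)*(1-r1)*p10" "0 \<le> x*(1-r0)*p00" using a p10 pd by simp_all
  ultimately show ?thesis unfolding gamma0_def by (intro frac01) (simp_all add: mult.commute)
qed

lemma G1: "Gop f 1 = f p00"
proof -
  have "gamma0 p00 p10 r0 r1 1 = p00" using rr r1 by (simp add: gamma0_def)
  moreover have "r0 * f (gamma1 p00 p10 r0 r1 1) = r0 * f p00"
    by (cases "r0 = 0") (simp_all add: gamma1_def)
  ultimately show ?thesis by (simp add: Gop_def rho_def algebra_simps)
qed

lemma G0: "Gop f 0 = f p10"
proof -
  have "gamma1 p00 p10 r0 r1 0 = p10" using rr r0 by (simp add: gamma1_def)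
  moreover have "(1-r1) * f (gamma0 p00 p10 r0 r1 0) = (1-r1) * f p10"
    by (cases "r1 = 1") (simp_all add: gamma0_def)
  ultimately show ?thesis by (simp add: Gop_def rho_def algebra_simps)
qed

lemma jensen:
  assumes "cvx f" "0\<le>x" "x\<le>1"
  shows "f (p10 + d*x) \<le> Gop f x"
proof -
  have e: "rho r0 r1 x * gamma1 p00 p10 r0 r1 x + (1 - rho r0 r1 x) * gamma0 p00 p10 r0 r1 x = p10 + d*x"
    unfolding N1[OF assms(2,3)] N0[OF assms(2,3)] by (simp add: d_def algebra_simps)
  show ?thesis using cvxD[OF assms(1), of "gamma1 p00 p10 r0 r1 x" "gamma0 p00 p10 r0 r1 x" "rho r0 r1 x"]
    g1r[OF assms(2,3)] g0r[OF assms(2,3)] rho01[OF assms(2,3)] unfolding e Gop_def by simp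
qed

lemma Gcvx: assumes "cvx f" shows "cvx (Gop f)"
  unfolding cvx_def
proof (intro allI impI)
  fix x y t :: real
  assume h: "0\<le>x \<and> x\<le>1 \<and> 0\<le>y \<and> y\<le>1 \<and> 0\<le>t \<and> t\<le>1"
  define z where "z = t*x+(1-t)*y"
  have z: "0 \<le> z" "z \<le> 1"
  proof -
    have "0 \<le> t*x" "0 \<le> (1-t)*y" using h by auto
    moreover have "t*x \<le> t*1" "(1-t)*y \<le> (1-t)*1" using h by (intro mult_left_mono; simp)+
    ultimately show "0 \<le> z" "z \<le> 1" unfolding z_def by simp_all
  qed
  have rz: "rho r0 r1 z = t * rho r0 r1 x + (1-t) * rho r0 r1 y"
    unfolding z_def rho_def by (simp add: algebra_simps)
  have 1: "rho r0 r1 z * f (gamma1 p00 p10 r0 r1 z) \<le> t * rho r0 r1 x * f (gamma1 p00 p10 r0 r1 x)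
      + (1-t) * rho r0 r1 y * f (gamma1 p00 p10 r0 r1 y)"
  proof (rule persp[OF assms])
    show "rho r0 r1 z * gamma1 p00 p10 r0 r1 z = t * rho r0 r1 x * gamma1 p00 p10 r0 r1 x
      + (1-t) * rho r0 r1 y * gamma1 p00 p10 r0 r1 y"
    proof -
      have ex: "rho r0 r1 x * gamma1 p00 p10 r0 r1 x = (1-x)*r1*p10 + x*r0*p00" using N1 h by blast
      have ey: "rho r0 r1 y * gamma1 p00 p10 r0 r1 y = (1-y)*r1*p10 + y*r0*p00" using N1 h by blast
      have "t * rho r0 r1 x * gamma1 p00 p10 r0 r1 x + (1-t) * rho r0 r1 y * gamma1 p00 p10 r0 r1 y
          = t * (rho r0 r1 x * gamma1 p00 p10 r0 r1 x) + (1-t) * (rho r0 r1 y * gamma1 p00 p10 r0 r1 y)"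
        by (simp only: mult.assoc)
      also have "\<dots> = t * ((1-x)*r1*p10 + x*r0*p00) + (1-t) * ((1-y)*r1*p10 + y*r0*p00)"
        by (simp only: ex ey)
      also have "\<dots> = (1-z)*r1*p10 + z*r0*p00" by (simp add: z_def algebra_simps)
      also have "\<dots> = rho r0 r1 z * gamma1 p00 p10 r0 r1 z" using N1[OF z] by simp
      finally show ?thesis by simp
    qed
  qed (use h rz rho01[of x] rho01[of y] g1r[of x] g1r[of y] in auto)
  have 0: "(1 - rho r0 r1 z) * f (gamma0 p00 p10 r0 r1 z) \<le> t * (1 - rho r0 r1 x) * f (gamma0 p00 p10 r0 r1 x)
      + (1-t) * (1 - rho r0 r1 y) * f (gamma0 p00 p10 r0 r1 y)"
  proof (rule persp[OF assms])
    show "(1 - rho r0 r1 z) * gamma0 p00 p10 r0 r1 z = t * (1 - rho r0 r1 x) * gamma0 p00 p10 r0 r1 x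
      + (1-t) * (1 - rho r0 r1 y) * gamma0 p00 p10 r0 r1 y"
    proof -
      have ex: "(1 - rho r0 r1 x) * gamma0 p00 p10 r0 r1 x = (1-x)*(1-r1)*p10 + x*(1-r0)*p00" using N0 h by blast
      have ey: "(1 - rho r0 r1 y) * gamma0 p00 p10 r0 r1 y = (1-y)*(1-r1)*p10 + y*(1-r0)*p00" using N0 h by blast
      have "t * (1 - rho r0 r1 x) * gamma0 p00 p10 r0 r1 x + (1-t) * (1 - rho r0 r1 y) * gamma0 p00 p10 r0 r1 y
          = t * ((1 - rho r0 r1 x) * gamma0 p00 p10 r0 r1 x) + (1-t) * ((1 - rho r0 r1 y) * gamma0 p00 p10 r0 r1 y)"
        by (simp only: mult.assoc)
      also have "\<dots> = t * ((1-x)*(1-r1)*p10 + x*(1-r0)*p00) + (1-t) * ((1-y)*(1-r1)*p10 + y*(1-r0)*p00)"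
        by (simp only: ex ey)
      also have "\<dots> = (1-z)*(1-r1)*p10 + z*(1-r0)*p00" by (simp add: z_def algebra_simps)
      also have "\<dots> = (1 - rho r0 r1 z) * gamma0 p00 p10 r0 r1 z" using N0[OF z] by simp
      finally show ?thesis by simp
    qed
  qed (use h rz rho01[of x] rho01[of y] g0r[of x] g0r[of y] in \<open>auto simp: algebra_simps\<close>)
  have "Gop f z \<le> t * Gop f x + (1-t) * Gop f y"
    using 1 0 unfolding Gop_def by (simp add: algebra_simps)
  then show "Gop f (t*x+(1-t)*y) \<le> t * Gop f x + (1-t) * Gop f y" unfolding z_def .
qed

end



context bl begin

lemma T01: "0\<le>x \<Longrightarrow> x\<le>1 \<Longrightarrow> 0 \<le> p10 + d*x \<and> p10 + d*x \<le> p00"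
proof -
  assume x: "0\<le>x" "x\<le>1"
  have "d*x \<le> d*1" using x d01 by (intro mult_left_mono) simp_all
  moreover have "0 \<le> d*x" using x d01 by simp
  ultimately have "d*x \<le> d" "0 \<le> d*x" by simp_all
  then show ?thesis using p10 by (simp add: d_def)
qed

lemma Gdecr1:
  assumes "cvx f" "decr f" "0\<le>x" "x\<le>1"
  shows "Gop f 1 \<le> Gop f x"
proof -
  have "Gop f 1 = f (p10 + d*1)" using G1 by (simp add: d_def)
  also have "\<dots> \<le> f (p10 + d*x)"
    using assms(2) T01[OF assms(3,4)] T01[of 1] p00 unfolding decr_def by (simp add: d_def)
  also have "\<dots> \<le> Gop f x" by (rule jensen[OF assms(1,3,4)])
  finally show ?thesis .
qed

lemma Gdecr:
  assumes "cvx f" "decr f"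
  shows "decr (Gop f)"
  unfolding decr_def
proof (intro allI impI)
  fix x y :: real assume h: "0 \<le> x \<and> x \<le> y \<and> y \<le> 1"
  show "Gop f y \<le> Gop f x"
  proof (cases "y = 1")
    case True then show ?thesis using Gdecr1[OF assms, of x] h by simp
  next
    case False
    hence y1: "y < 1" using h by simp
    define t where "t = (1-y)/(1-x)"
    have t: "0 \<le> t" "t \<le> 1" using h y1 by (auto simp: t_def)
    have "1 - x \<noteq> 0" using h y1 by simp
    hence a: "t*(1-x) = 1-y" by (simp add: t_def)
    have "t*x + (1-t)*1 = 1 - t*(1-x)" by (simp add: algebra_simps)
    hence ey: "t*x + (1-t)*1 = y" using a by simp
    have "Gop f y \<le> t * Gop f x + (1-t) * Gop f 1"
      using cvxD[OF Gcvx[OF assms(1)], of x 1 t] h t unfolding ey by simp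
    also have "\<dots> \<le> t * Gop f x + (1-t) * Gop f x"
      using Gdecr1[OF assms, of x] h t by (intro add_left_mono mult_left_mono) auto
    finally show ?thesis by (simp add: algebra_simps)
  qed
qed

lemma Glip:
  assumes "cvx f" "decr f" "lipd L f"
  shows "lipd (d*L) (Gop f)"
  unfolding lipd_def
proof (intro allI impI)
  fix x y :: real assume h: "0 \<le> x \<and> x \<le> y \<and> y \<le> 1"
  have "Gop f x + Gop f (y-x) \<le> Gop f 0 + Gop f y" using chord[OF Gcvx[OF assms(1)]] h by blast
  moreover have "f (p10 + d*(y-x)) \<le> Gop f (y-x)" using jensen[OF assms(1)] h by simp
  moreover have "f p10 - f (p10 + d*(y-x)) \<le> L * (d*(y-x))"
  proof -
    have A: "\<forall>a b. 0\<le>a \<and> a\<le>b \<and> b\<le>1 \<longrightarrow> f a - f b \<le> L*(b-a)" using assms(3) unfolding lipd_def .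
    have "0 \<le> d*(y-x)" using d01 h by simp
    then show ?thesis using A[rule_format, of p10 "p10 + d*(y-x)"] T01[of "y-x"] h p10 p00 by simp
  qed
  ultimately show "Gop f x - Gop f y \<le> d*L*(y-x)" using G0 by (simp add: algebra_simps)
qed

definition "P f \<longleftrightarrow> cvx f \<and> decr f \<and> lipd L f"

lemma RS_aff: "RS R0 R1 (t*x+(1-t)*y) = t * RS R0 R1 x + (1-t) * RS R0 R1 y"
  by (simp add: RS_def algebra_simps)
lemma RS_diff: "RS R0 R1 x - RS R0 R1 y = (R1-R0)*(y-x)"
  by (simp add: RS_def algebra_simps)
lemma g2_aff: "g2 (t*x+(1-t)*y) = t * g2 x + (1-t) * g2 y"
  by (simp add: g2 algebra_simps)

lemma max_cvx: "(a::real) \<le> t*a1 + (1-t)*a2 \<Longrightarrow> b \<le> t*b1 + (1-t)*b2 \<Longrightarrow> 0\<le>t \<Longrightarrow> t\<le>1 \<Longrightarrow>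
   max a b \<le> t * max a1 b1 + (1-t) * max a2 b2"
proof -
  assume h: "a \<le> t*a1 + (1-t)*a2" "b \<le> t*b1 + (1-t)*b2" "0\<le>t" "t\<le>1"
  have "t*a1 \<le> t*max a1 b1" "t*b1 \<le> t*max a1 b1" "(1-t)*a2 \<le> (1-t)*max a2 b2" "(1-t)*b2 \<le> (1-t)*max a2 b2"
    using h by (intro mult_left_mono; simp)+
  then show ?thesis using h by simp
qed

lemma TP: assumes "P f" shows "P (Top f)"
proof -
  have f: "cvx f" "decr f" "lipd L f" using assms by (auto simp: P_def)
  have c: "cvx (Top f)" unfolding cvx_def
  proof (intro allI impI)
    fix x y t :: real assume h: "0\<le>x \<and> x\<le>1 \<and> 0\<le>y \<and> y\<le>1 \<and> 0\<le>t \<and> t\<le>1"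
    have "beta * Gop f (t*x+(1-t)*y) \<le> beta * (t * Gop f x + (1-t) * Gop f y)"
      using cvxD[OF Gcvx[OF f(1)], of x y t] h b0 by (intro mult_left_mono) auto
    hence 1: "TSop f (t*x+(1-t)*y) \<le> t * TSop f x + (1-t) * TSop f y"
      unfolding TSop_def RS_aff by (simp add: algebra_simps)
    have "g2 x \<in> {0..1}" "g2 y \<in> {0..1}" using g2r h by auto
    hence "beta * f (g2 (t*x+(1-t)*y)) \<le> beta * (t * f (g2 x) + (1-t) * f (g2 y))"
      using cvxD[OF f(1), of "g2 x" "g2 y" t] h b0 unfolding g2_aff by (intro mult_left_mono) auto
    hence 2: "TNop f (t*x+(1-t)*y) \<le> t * TNop f x + (1-t) * TNop f y"
      unfolding TNop_def by (simp add: algebra_simps)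
    show "Top f (t*x+(1-t)*y) \<le> t * Top f x + (1-t) * Top f y"
      unfolding Top_def using max_cvx[OF 1 2] h by simp
  qed
  have dl: "Top f y \<le> Top f x \<and> Top f x - Top f y \<le> L*(y-x)" if h: "0\<le>x" "x\<le>y" "y\<le>1" for x y
  proof -
    have G: "Gop f y \<le> Gop f x" "Gop f x - Gop f y \<le> d*L*(y-x)"
      using Gdecr[OF f(1,2)] Glip[OF f] h unfolding decr_def lipd_def by auto
    have e1: "TSop f x - TSop f y = (R1-R0)*(y-x) + beta*(Gop f x - Gop f y)"
      unfolding TSop_def RS_def by (simp add: algebra_simps)
    have "beta*(Gop f x - Gop f y) \<le> beta*(d*L*(y-x))" using G b0 by (intro mult_left_mono) auto
    moreover have "0 \<le> beta*(Gop f x - Gop f y)" using G b0 by simp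
    moreover have "0 \<le> (R1-R0)*(y-x)" using RR h by simp
    moreover have "(R1-R0)*(y-x) + beta*(d*L*(y-x)) = L*(y-x)"
      using Leq by (metis distrib_right mult.assoc)
    ultimately have S: "TSop f y \<le> TSop f x" "TSop f x - TSop f y \<le> L*(y-x)"
      using e1 by linarith+
    have gx: "g2 x \<le> g2 y" using s0 h by (simp add: g2 mult_left_mono)
    have g01: "0 \<le> g2 x" "g2 y \<le> 1" using g2r h by auto
    have F: "f (g2 y) \<le> f (g2 x)" "f (g2 x) - f (g2 y) \<le> L * (g2 y - g2 x)"
      using f(2,3) gx g01 unfolding decr_def lipd_def by auto
    have gd: "g2 y - g2 x = s*(y-x)" by (simp add: g2 algebra_simps)
    have B: "beta * (L * (s*(y-x))) \<le> L*(y-x)"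
    proof -
      have "beta * s \<le> 1" using b0 b1 s0 s1 by (metis less_eq_real_def mult_le_one)
      moreover have "0 \<le> L*(y-x)" using L0 h by simp
      ultimately have "(beta*s) * (L*(y-x)) \<le> 1 * (L*(y-x))" by (rule mult_right_mono)
      then show ?thesis by (simp add: algebra_simps)
    qed
    have e2: "TNop f x - TNop f y = beta * (f (g2 x) - f (g2 y))" unfolding TNop_def by (simp add: algebra_simps)
    have "beta * (f (g2 x) - f (g2 y)) \<le> beta * (L * (s*(y-x)))"
      using F gd b0 by (intro mult_left_mono) auto
    moreover have "0 \<le> beta * (f (g2 x) - f (g2 y))" using F b0 by simp
    ultimately have N: "TNop f y \<le> TNop f x" "TNop f x - TNop f y \<le> L*(y-x)"
      using e2 B by linarith+
    show ?thesis using S N unfolding Top_def by (auto simp: max_def)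
  qed
  show ?thesis using c dl unfolding P_def decr_def lipd_def by blast
qed

end



lemma max_diff: "\<bar>max (a::real) b - max c e\<bar> \<le> max \<bar>a - c\<bar> \<bar>b - e\<bar>"
  unfolding max_def abs_if by auto

lemma comb_abs: "\<bar>a1\<bar> \<le> (M::real) \<Longrightarrow> \<bar>a0\<bar> \<le> M \<Longrightarrow> 0 \<le> r \<Longrightarrow> r \<le> 1 \<Longrightarrow> \<bar>r*a1 + (1-r)*a0\<bar> \<le> M"
proof -
  assume h: "\<bar>a1\<bar> \<le> M" "\<bar>a0\<bar> \<le> M" "0 \<le> r" "r \<le> 1"
  have "\<bar>r*a1 + (1-r)*a0\<bar> \<le> \<bar>r*a1\<bar> + \<bar>(1-r)*a0\<bar>" by (rule abs_triangle_ineq)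
  also have "\<dots> = r*\<bar>a1\<bar> + (1-r)*\<bar>a0\<bar>" using h by (simp add: abs_mult)
  also have "\<dots> \<le> r*M + (1-r)*M" using h by (intro add_mono mult_left_mono) auto
  finally show ?thesis by (simp add: algebra_simps)
qed

context bl begin

lemma contr:
  assumes "\<forall>z. 0\<le>z \<and> z\<le>1 \<longrightarrow> \<bar>f z - g z\<bar> \<le> M" "0\<le>x" "x\<le>1"
  shows "\<bar>Top f x - Top g x\<bar> \<le> beta * M"
proof -
  have "\<bar>Gop f x - Gop g x\<bar> \<le> M"
  proof -
    have "Gop f x - Gop g x = rho r0 r1 x * (f (gamma1 p00 p10 r0 r1 x) - g (gamma1 p00 p10 r0 r1 x))
       + (1 - rho r0 r1 x) * (f (gamma0 p00 p10 r0 r1 x) - g (gamma0 p00 p10 r0 r1 x))"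
      unfolding Gop_def by (simp add: algebra_simps)
    then show ?thesis using comb_abs assms g1r[OF assms(2,3)] g0r[OF assms(2,3)] rho01[OF assms(2,3)] by simp
  qed
  hence 1: "\<bar>TSop f x - TSop g x\<bar> \<le> beta * M"
    unfolding TSop_def using b0 by (simp add: abs_mult flip: right_diff_distrib)
  have "\<bar>f (g2 x) - g (g2 x)\<bar> \<le> M" using assms g2r by blast
  hence 2: "\<bar>TNop f x - TNop g x\<bar> \<le> beta * M"
    unfolding TNop_def using b0 by (simp add: abs_mult flip: right_diff_distrib)
  have "max \<bar>TSop f x - TSop g x\<bar> \<bar>TNop f x - TNop g x\<bar> \<le> beta * M" using 1 2 by (rule max.boundedI)
  then show ?thesis unfolding Top_def using max_diff[of "TSop f x" "TNop f x" "TSop g x" "TNop g x"] by linarith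
qed

definition "it n = (Top ^^ n) (\<lambda>_. 0)"

lemma itP: "P (it n)"
proof (induction n)
  case 0
  have "P (\<lambda>_. 0)" unfolding P_def cvx_def decr_def lipd_def using L0 by simp
  then show ?case by (simp add: it_def)
next
  case (Suc n)
  then show ?case using TP by (simp add: it_def)
qed

lemma main:
  assumes sol: "bandit_solution g2 p00 p10 r0 r1 R0 R1 eta beta VS VNS V"
    and cond: "beta * (s + d) \<le> 1"
  shows "decreasing_on_unit (\<lambda>\<pi>. VS \<pi> - VNS \<pi>)"
proof -
  obtain B where B: "\<forall>\<pi>\<in>{0..1}. \<bar>V \<pi>\<bar> \<le> B" using sol unfolding bandit_solution_def by blast
  have eq: "VS x = TSop V x" "VNS x = TNop V x" "V x = Top V x" if "0 \<le> x" "x \<le> 1" for x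
    using sol that unfolding bandit_solution_def TSop_def TNop_def Top_def Gop_def by auto
  have dist: "\<forall>z. 0\<le>z \<and> z\<le>1 \<longrightarrow> \<bar>it n z - V z\<bar> \<le> beta^n * B" for n
  proof (induction n)
    case 0
    then show ?case using B by (simp add: it_def)
  next
    case (Suc n)
    show ?case
    proof (intro allI impI)
      fix z :: real assume z: "0\<le>z \<and> z\<le>1"
      have "\<bar>Top (it n) z - Top V z\<bar> \<le> beta * (beta^n * B)" using contr[OF Suc] z by blast
      moreover have "it (Suc n) z = Top (it n) z" by (simp add: it_def)
      ultimately show "\<bar>it (Suc n) z - V z\<bar> \<le> beta^Suc n * B" using eq(3)[of z] z by simp
    qed
  qed
  have dl: "it n z \<le> V z + beta^n * B \<and> V z \<le> it n z + beta^n * B" if "0 \<le> z" "z \<le> 1" for n z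
  proof -
    have "\<bar>it n z - V z\<bar> \<le> beta^n * B" using dist that by blast
    then show ?thesis unfolding abs_le_iff by linarith
  qed
  have Vd: "decr V" unfolding decr_def
  proof (intro allI impI)
    fix x y :: real assume h: "0 \<le> x \<and> x \<le> y \<and> y \<le> 1"
    show "V y \<le> V x"
    proof (rule le_of_pow_bound[OF b0 b1])
      show "\<forall>n. V y \<le> V x + beta^n * (2*B)"
      proof
        fix n
        have "it n y \<le> it n x" using itP[of n] h unfolding P_def decr_def by blast
        then show "V y \<le> V x + beta^n * (2*B)" using dl[of y n] dl[of x n] h by simp
      qed
    qed
  qed
  have Vl: "lipd L V" unfolding lipd_def
  proof (intro allI impI)
    fix x y :: real assume h: "0 \<le> x \<and> x \<le> y \<and> y \<le> 1"
    show "V x - V y \<le> L*(y-x)"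
    proof (rule le_of_pow_bound[OF b0 b1])
      show "\<forall>n. V x - V y \<le> L*(y-x) + beta^n * (2*B)"
      proof
        fix n
        have "it n x - it n y \<le> L*(y-x)" using itP[of n] h unfolding P_def lipd_def by blast
        then show "V x - V y \<le> L*(y-x) + beta^n * (2*B)" using dl[of y n] dl[of x n] h by simp
      qed
    qed
  qed
  have Vc: "cvx V" unfolding cvx_def
  proof (intro allI impI)
    fix x y t :: real assume h: "0\<le>x \<and> x\<le>1 \<and> 0\<le>y \<and> y\<le>1 \<and> 0\<le>t \<and> t\<le>1"
    define z where "z = t*x+(1-t)*y"
    have z: "0 \<le> z" "z \<le> 1"
    proof -
      have "0 \<le> t*x" "0 \<le> (1-t)*y" using h by auto
      moreover have "t*x \<le> t*1" "(1-t)*y \<le> (1-t)*1" using h by (intro mult_left_mono; simp)+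
      ultimately show "0 \<le> z" "z \<le> 1" unfolding z_def by simp_all
    qed
    have "V z \<le> t * V x + (1-t) * V y"
    proof (rule le_of_pow_bound[OF b0 b1])
      show "\<forall>n. V z \<le> t * V x + (1-t) * V y + beta^n * (2*B)"
      proof
        fix n
        define e where "e = beta^n * B"
        have "it n z \<le> t * it n x + (1-t) * it n y" using itP[of n] h unfolding P_def cvx_def z_def by blast
        moreover have "t * it n x \<le> t * (V x + e)" using dl[of x n] h by (intro mult_left_mono) (auto simp: e_def)
        moreover have "(1-t) * it n y \<le> (1-t) * (V y + e)" using dl[of y n] h by (intro mult_left_mono) (auto simp: e_def)
        moreover have "V z \<le> it n z + e" using dl[of z n] z by (simp add: e_def)
        ultimately have "V z \<le> t * V x + (1-t) * V y + 2*e" by (simp add: algebra_simps)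
        then show "V z \<le> t * V x + (1-t) * V y + beta^n * (2*B)" by (simp add: e_def)
      qed
    qed
    then show "V (t*x+(1-t)*y) \<le> t * V x + (1-t) * V y" unfolding z_def .
  qed
  show ?thesis unfolding decreasing_on_unit_def
  proof (intro allI impI)
    fix x y :: real assume h: "0 \<le> x \<and> x \<le> y \<and> y \<le> 1"
    have Gd: "Gop V y \<le> Gop V x" using Gdecr[OF Vc Vd] h unfolding decr_def by blast
    have e1: "VS x - VS y = (R1-R0)*(y-x) + beta*(Gop V x - Gop V y)"
    proof -
      have "VS x = TSop V x" "VS y = TSop V y" using eq h by auto
      then show ?thesis unfolding TSop_def RS_def by (simp add: algebra_simps)
    qed
    have "0 \<le> beta*(Gop V x - Gop V y)" using Gd b0 by simp
    hence S: "(R1-R0)*(y-x) \<le> VS x - VS y" using e1 by linarith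
    have gx: "g2 x \<le> g2 y" using s0 h by (simp add: g2 mult_left_mono)
    have g01: "0 \<le> g2 x" "g2 y \<le> 1" using g2r h by auto
    have F: "V (g2 x) - V (g2 y) \<le> L * (g2 y - g2 x)"
      using Vl gx g01 unfolding lipd_def by auto
    have gd: "g2 y - g2 x = s*(y-x)" by (simp add: g2 algebra_simps)
    have e2: "VNS x - VNS y = beta * (V (g2 x) - V (g2 y))"
    proof -
      have "VNS x = TNop V x" "VNS y = TNop V y" using eq h by auto
      then show ?thesis unfolding TNop_def by (simp add: algebra_simps)
    qed
    have "beta * (V (g2 x) - V (g2 y)) \<le> beta * (L * (s*(y-x)))"
      using F gd b0 by (intro mult_left_mono) auto
    moreover have "beta * (L * (s*(y-x))) \<le> (R1-R0)*(y-x)"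
    proof -
      have "beta * s \<le> 1 - beta*d" using cond by (simp add: algebra_simps)
      hence "(beta*s) * L \<le> (1 - beta*d) * L" using L0 by (rule mult_right_mono)
      also have "(1 - beta*d) * L = R1 - R0" using bd by (simp add: L_def)
      finally have "(beta*s*L) * (y-x) \<le> (R1-R0) * (y-x)" using h by (intro mult_right_mono) auto
      then show ?thesis by (simp add: algebra_simps)
    qed
    ultimately show "VS y - VNS y \<le> VS x - VNS x" using e2 S by linarith
  qed
qed

end

lemma gamma2_Suc: "gamma2 (Suc K) p00 p10 x = p10 + (p00 - p10) * gamma2 K p00 p10 x"
  unfolding gamma2_def sum.lessThan_Suc_shift
  by (simp add: sum_distrib_left algebra_simps)

lemma gamma2_range:
  assumes "0 \<le> p10" "p10 < p00" "p00 \<le> 1" "0 \<le> x" "x \<le> 1"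
  shows "0 \<le> gamma2 K p00 p10 x \<and> gamma2 K p00 p10 x \<le> 1"
proof (induction K)
  case 0 then show ?case using assms by (simp add: gamma2_def)
next
  case (Suc K)
  let ?g = "gamma2 K p00 p10 x"
  have a: "(p00-p10) * ?g \<le> p00-p10" using mult_left_le[of ?g "p00-p10"] Suc assms by simp
  have a0: "0 \<le> (p00-p10) * ?g" using Suc assms by simp
  have "p10 + (p00-p10) * ?g \<le> p00" using a by simp
  hence "0 \<le> p10 + (p00-p10) * ?g" "p10 + (p00-p10) * ?g \<le> 1" using assms a0 by linarith+
  then show ?case unfolding gamma2_Suc by blast
qed

theorem lemma4:
  fixes K :: nat and p00 p10 \<rho>0 \<rho>1 R0 R1 \<eta> \<beta> :: real
  assumes "K \<ge> 1"
    and "0 \<le> p00" "p00 \<le> 1" "0 \<le> p10" "p10 \<le> 1"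
    and "0 \<le> \<rho>0" "\<rho>0 \<le> 1" "0 \<le> \<rho>1" "\<rho>1 \<le> 1"
    and "\<rho>0 < \<rho>1" "R0 < R1"
    and "0 < \<beta>" "\<beta> < 1"
    and "p00 > p10"
  defines "b \<equiv> min 1 ((R1 - R0) / (\<rho>1 - \<rho>0))"
  shows
    "(\<forall>VS VNS V. bandit_solution (\<lambda>_. qlim p00 p10) p00 p10 \<rho>0 \<rho>1 R0 R1 \<eta> \<beta> VS VNS V
        \<longrightarrow> decreasing_on_unit (\<lambda>\<pi>. VS \<pi> - VNS \<pi>))
     \<and> (K > 1 \<and> 0 < p00 - p10 \<and> p00 - p10 < b / 5 \<longrightarrow>
        (\<forall>VS VNS V. bandit_solution (gamma2 K p00 p10) p00 p10 \<rho>0 \<rho>1 R0 R1 \<eta> \<beta> VS VNS V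
          \<longrightarrow> decreasing_on_unit (\<lambda>\<pi>. VS \<pi> - VNS \<pi>)))
     \<and> (K > 1 \<and> \<beta> < b / 5 \<longrightarrow>
        (\<forall>VS VNS V. bandit_solution (gamma2 K p00 p10) p00 p10 \<rho>0 \<rho>1 R0 R1 \<eta> \<beta> VS VNS V
          \<longrightarrow> decreasing_on_unit (\<lambda>\<pi>. VS \<pi> - VNS \<pi>)))"
proof -
  define dd where "dd = p00 - p10"
  have dd: "0 < dd" "dd \<le> 1" using assms by (auto simp: dd_def)
  have b1: "b \<le> 1" unfolding b_def by simp
  have q: "0 \<le> qlim p00 p10 \<and> qlim p00 p10 \<le> 1"
  proof (cases "1 - (p00 - p10) = 0")
    case True then show ?thesis by (simp add: qlim_def)
  next
    case False
    hence "0 < 1 - (p00 - p10)" using assms by simp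
    moreover have "p10 \<le> 1 - (p00 - p10)" using assms by simp
    ultimately show ?thesis using assms unfolding qlim_def by (auto simp: divide_le_eq_1)
  qed
  interpret A: bl p00 p10 \<rho>0 \<rho>1 R0 R1 \<eta> \<beta> 0 "qlim p00 p10" "\<lambda>_. qlim p00 p10"
    using assms q by unfold_locales auto
  interpret Bn: bl p00 p10 \<rho>0 \<rho>1 R0 R1 \<eta> \<beta> "dd^K" "p10 * (\<Sum>j<K. dd ^ j)" "gamma2 K p00 p10"
  proof unfold_locales
    show "0 \<le> dd^K" using dd by simp
    show "dd^K \<le> 1" using dd by (simp add: power_le_one)
    show "\<And>x. gamma2 K p00 p10 x = dd ^ K * x + p10 * (\<Sum>j<K. dd ^ j)" by (simp add: gamma2_def dd_def)
    show "\<And>x. 0\<le>x \<Longrightarrow> x\<le>1 \<Longrightarrow> 0 \<le> gamma2 K p00 p10 x \<and> gamma2 K p00 p10 x \<le> 1"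
      using gamma2_range assms by auto
  qed (use assms in auto)
  have Ad: "A.d = dd" "Bn.d = dd" by (simp_all add: A.d_def Bn.d_def dd_def)
  have part1: "\<beta> * (0 + A.d) \<le> 1" using A.bd by simp
  have part2: "\<beta> * (dd^K + Bn.d) \<le> 1" if K: "K > 1" and c: "dd < 1/5 \<or> \<beta> < 1/5"
  proof -
    have "dd^K \<le> dd^2" using K dd by (intro power_decreasing) auto
    also have "dd^2 \<le> dd" using dd by (simp add: power2_eq_square mult_left_le)
    finally have k: "dd^K \<le> dd" .
    show ?thesis
    proof (cases "dd < 1/5")
      case True
      have "dd^K \<le> dd^2" using K dd by (intro power_decreasing) auto
      moreover have "dd^2 \<le> dd * (1/5)" using dd True by (simp add: power2_eq_square)
      ultimately have "dd^K + dd \<le> 1" using True by linarith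
      moreover have "0 \<le> dd^K + dd" using dd by simp
      ultimately have "\<beta> * (dd^K + dd) \<le> 1 * 1" using assms by (intro mult_mono) auto
      then show ?thesis using Ad by simp
    next
      case False
      hence "\<beta> < 1/5" using c by simp
      moreover have "dd^K + dd \<le> 2" using k dd by simp
      moreover have "0 \<le> dd^K + dd" using dd by simp
      ultimately have "\<beta> * (dd^K + dd) \<le> (1/5) * 2" using assms by (intro mult_mono) auto
      then show ?thesis using Ad by simp
    qed
  qed
  show ?thesis
  proof (intro conjI impI allI)
    fix VS VNS V
    assume "bandit_solution (\<lambda>_. qlim p00 p10) p00 p10 \<rho>0 \<rho>1 R0 R1 \<eta> \<beta> VS VNS V"
    then show "decreasing_on_unit (\<lambda>\<pi>. VS \<pi> - VNS \<pi>)" using A.main part1 by blast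
  next
    fix VS VNS V
    assume c: "1 < K \<and> 0 < p00 - p10 \<and> p00 - p10 < b / 5"
      and s: "bandit_solution (gamma2 K p00 p10) p00 p10 \<rho>0 \<rho>1 R0 R1 \<eta> \<beta> VS VNS V"
    have "dd < 1/5" using c b1 by (simp add: dd_def)
    then show "decreasing_on_unit (\<lambda>\<pi>. VS \<pi> - VNS \<pi>)" using Bn.main[OF s] part2 c by blast
  next
    fix VS VNS V
    assume c: "1 < K \<and> \<beta> < b / 5"
      and s: "bandit_solution (gamma2 K p00 p10) p00 p10 \<rho>0 \<rho>1 R0 R1 \<eta> \<beta> VS VNS V"
    have "\<beta> < 1/5" using c b1 by simp
    then show "decreasing_on_unit (\<lambda>\<pi>. VS \<pi> - VNS \<pi>)" using Bn.main[OF s] part2 c by blast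
  qed
qed


end
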